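(* Let $k$ be a field and let $A$ be a $k$-algebra with filtration $A_0\subseteq A_1\subseteq\cdots$ (subspaces with $\bigcup_nA_n=A$ and $A_iA_j\subseteq A_{i+j}$). Let $R=\bigoplus_{n\ge0}x^nA_n\subseteq A[x]$ be the Rees algebra, and suppose every element of $R$ is integral over $k[x]$. Then $\operatorname{gr}(A)_{\ge1}=\bigoplus_{n\ge1}A_n/A_{n-1}$ is nil.
   Context: $A$ is associative with unit, $A[x]$ is the polynomial algebra in a central indeterminate $x$. An element $a(x)\in A[x]$ is integral over $k[x]$ if $a(x)^n+p_{n-1}(x)a(x)^{n-1}+\cdots+p_0(x)=0$ for some $n\ge1$ and $p_i(x)\in k[x]$. The associated graded algebra is $\operatorname{gr}(A)=A_0\oplus A_1/A_0\oplus A_2/A_1\oplus\cdots$ with multiplication $(a_p+A_{p-1})(a_q+A_{q-1})=a_pa_q+A_{p+q-1}$ for $a_p\in A_p,a_q\in A_q$ ($A_{-1}=\{0\}$), extended linearly. Nil means every element is nilpotent. *)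

theory Defs
  imports "HOL-Computational_Algebra.Polynomial"
begin

definition k_algebra :: "('k::field \<Rightarrow> 'a::ring_1 \<Rightarrow> 'a) \<Rightarrow> bool" where
  "k_algebra scale \<longleftrightarrow> module scale \<and>
     (\<forall>c a b. scale c (a * b) = scale c a * b \<and> scale c (a * b) = a * scale c b)"

definition algebra_filtration ::
    "('k::field \<Rightarrow> 'a::ring_1 \<Rightarrow> 'a) \<Rightarrow> (nat \<Rightarrow> 'a set) \<Rightarrow> bool" where
  "algebra_filtration scale Af \<longleftrightarrow>
     (\<forall>n. module.subspace scale (Af n)) \<and>
     (\<forall>n. Af n \<subseteq> Af (Suc n)) \<and>
     (\<Union>n. Af n) = UNIV \<and>
     (\<forall>i j a b. a \<in> Af i \<longrightarrow> b \<in> Af j \<longrightarrow> a * b \<in> Af (i + j))"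

text \<open>Elements of A[x] (x central) are finitely supported coefficient sequences.\<close>
definition apoly :: "(nat \<Rightarrow> 'a::zero) set" where
  "apoly = {f. finite {n. f n \<noteq> 0}}"

definition apoly_one :: "nat \<Rightarrow> 'a::ring_1" where
  "apoly_one = (\<lambda>n. if n = 0 then 1 else 0)"

definition apoly_mult :: "(nat \<Rightarrow> 'a::ring_1) \<Rightarrow> (nat \<Rightarrow> 'a) \<Rightarrow> nat \<Rightarrow> 'a" where
  "apoly_mult f g = (\<lambda>m. \<Sum>i\<le>m. f i * g (m - i))"

fun apoly_pow :: "(nat \<Rightarrow> 'a::ring_1) \<Rightarrow> nat \<Rightarrow> nat \<Rightarrow> 'a" where
  "apoly_pow f 0 = apoly_one"
| "apoly_pow f (Suc n) = apoly_mult (apoly_pow f n) f"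

definition kpoly_act ::
    "('k::field \<Rightarrow> 'a::ring_1 \<Rightarrow> 'a) \<Rightarrow> 'k poly \<Rightarrow> (nat \<Rightarrow> 'a) \<Rightarrow> nat \<Rightarrow> 'a" where
  "kpoly_act scale p f = (\<lambda>m. \<Sum>j\<le>m. scale (coeff p j) (f (m - j)))"

definition integral_over_kx ::
    "('k::field \<Rightarrow> 'a::ring_1 \<Rightarrow> 'a) \<Rightarrow> (nat \<Rightarrow> 'a) \<Rightarrow> bool" where
  "integral_over_kx scale f \<longleftrightarrow>
     (\<exists>n\<ge>1. \<exists>p :: nat \<Rightarrow> 'k poly.
        (\<lambda>m. apoly_pow f n m + (\<Sum>i<n. kpoly_act scale (p i) (apoly_pow f i) m)) = (\<lambda>_. 0))"

definition rees_algebra :: "(nat \<Rightarrow> 'a::ring_1 set) \<Rightarrow> (nat \<Rightarrow> 'a) set" where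
  "rees_algebra Af = {f \<in> apoly. \<forall>n. f n \<in> Af n}"

fun filt_prev :: "(nat \<Rightarrow> 'a::zero set) \<Rightarrow> nat \<Rightarrow> 'a set" where
  "filt_prev Af 0 = {0}"
| "filt_prev Af (Suc n) = Af n"

text \<open>An element of gr(A) = \<Oplus> A_n/A_{n-1} is represented by a finitely supported
  family g of representatives g n \<in> A_n of its homogeneous components g n + A_{n-1}.
  The product in gr(A) of represented elements is represented by the convolution
  apoly_mult (this is the bilinear extension of
  (a_p + A_{p-1})(a_q + A_{q-1}) = a_p a_q + A_{p+q-1}), and a represented element is
  zero iff every component g n lies in A_{n-1}.\<close>
definition gr_rep :: "(nat \<Rightarrow> 'a::ring_1 set) \<Rightarrow> (nat \<Rightarrow> 'a) \<Rightarrow> bool" where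
  "gr_rep Af g \<longleftrightarrow> g \<in> apoly \<and> (\<forall>n. g n \<in> Af n)"

definition gr_is_zero :: "(nat \<Rightarrow> 'a::ring_1 set) \<Rightarrow> (nat \<Rightarrow> 'a) \<Rightarrow> bool" where
  "gr_is_zero Af g \<longleftrightarrow> (\<forall>n. g n \<in> filt_prev Af n)"

definition gr_pos_nil :: "(nat \<Rightarrow> 'a::ring_1 set) \<Rightarrow> bool" where
  "gr_pos_nil Af \<longleftrightarrow>
     (\<forall>g. gr_rep Af g \<and> g 0 = 0 \<longrightarrow> (\<exists>N\<ge>1. gr_is_zero Af (apoly_pow g N)))"

end

theory Submission
  imports Defs "HOL-Computational_Algebra.Formal_Power_Series"
begin

unbundle fps_syntax

definition inR :: "(nat \<Rightarrow> 'a::ring_1 set) \<Rightarrow> 'a fps \<Rightarrow> bool" where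
  "inR Af F \<longleftrightarrow> (\<forall>n. F $ n \<in> Af n)"
definition inI :: "(nat \<Rightarrow> 'a::ring_1 set) \<Rightarrow> 'a fps \<Rightarrow> bool" where
  "inI Af F \<longleftrightarrow> (\<forall>n. F $ n \<in> filt_prev Af n)"
definition sc :: "('k::field \<Rightarrow> 'a::ring_1 \<Rightarrow> 'a) \<Rightarrow> 'k \<Rightarrow> 'a fps \<Rightarrow> 'a fps" where
  "sc scale c F = Abs_fps (\<lambda>n. scale c (F $ n))"
definition Cf :: "('k::field \<Rightarrow> 'a::ring_1 \<Rightarrow> 'a) \<Rightarrow> 'k poly \<Rightarrow> 'a fps" where
  "Cf scale p = Abs_fps (\<lambda>j. scale (coeff p j) 1)"
definition Cs :: "('k::field \<Rightarrow> 'a::ring_1 \<Rightarrow> 'a) \<Rightarrow> 'k poly \<Rightarrow> 'a fps" where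
  "Cs scale p = Abs_fps (\<lambda>j. scale (coeff p (Suc j)) 1)"

lemma pow_eq: "apoly_pow g n = fps_nth (Abs_fps g ^ n)"
proof (induction n)
  case 0
  then show ?case by (auto simp: apoly_one_def)
next
  case (Suc n)
  show ?case
    by (rule ext) (simp add: Suc apoly_mult_def power_Suc2 fps_mult_nth atMost_atLeast0 del: power_Suc)
qed

context
  fixes scale :: "'k::field \<Rightarrow> 'a::ring_1 \<Rightarrow> 'a" and Af :: "nat \<Rightarrow> 'a set"
  assumes kalg: "k_algebra scale" and filt: "algebra_filtration scale Af"
begin

unbundle fps_syntax

lemma md: "module scale" using kalg unfolding k_algebra_def by blast
lemma sub: "module.subspace scale (Af n)" using filt unfolding algebra_filtration_def by blast
lemma mono_le: assumes "i \<le> j" shows "Af i \<subseteq> Af j"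
proof -
  have h: "\<And>n. Af n \<subseteq> Af (Suc n)" using filt unfolding algebra_filtration_def by blast
  show ?thesis by (rule lift_Suc_mono_le[of Af, OF h assms])
qed
lemma mulA: "a \<in> Af i \<Longrightarrow> b \<in> Af j \<Longrightarrow> a * b \<in> Af (i + j)"
  using filt unfolding algebra_filtration_def by blast
lemma sub_prev: "module.subspace scale (filt_prev Af n)"
  by (cases n) (simp_all add: module.subspace_single_0[OF md] sub)
lemma prev_mult: "a \<in> filt_prev Af i \<Longrightarrow> b \<in> Af l \<Longrightarrow> a * b \<in> filt_prev Af (i + l)"
  by (cases i) (auto simp: mulA module.subspace_0[OF md sub_prev])
lemma phi: "scale c a = scale c 1 * a"
proof -
  have "scale c (1 * a) = scale c 1 * a" using kalg unfolding k_algebra_def by blast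
  then show ?thesis by simp
qed
lemma phi2: "scale c (a * b) = a * scale c b"
  using kalg unfolding k_algebra_def by blast

lemma R_mult: "inR Af F \<Longrightarrow> inR Af H \<Longrightarrow> inR Af (F * H)"
  unfolding inR_def fps_mult_nth
proof (intro allI module.subspace_sum[OF md sub])
  fix n x :: nat assume "\<forall>n. F $ n \<in> Af n" "\<forall>n. H $ n \<in> Af n" "x \<in> {0..n}"
  then have "F $ x * H $ (n - x) \<in> Af (x + (n - x))" by (intro mulA) auto
  then show "F $ x * H $ (n - x) \<in> Af n" using \<open>x \<in> {0..n}\<close> by simp
qed

lemma R_sum: "(\<And>i. i \<in> S \<Longrightarrow> inR Af (f i)) \<Longrightarrow> inR Af (sum f S)"
  unfolding inR_def fps_sum_nth by (auto intro!: module.subspace_sum[OF md sub])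
lemma I_sum: "(\<And>i. i \<in> S \<Longrightarrow> inI Af (f i)) \<Longrightarrow> inI Af (sum f S)"
  unfolding inI_def fps_sum_nth by (auto intro!: module.subspace_sum[OF md sub_prev])
lemma I_uminus: "inI Af F \<Longrightarrow> inI Af (- F)"
  unfolding inI_def by (auto intro!: module.subspace_neg[OF md sub_prev])
lemma I_sc: "inI Af F \<Longrightarrow> inI Af (sc scale c F)"
  unfolding inI_def sc_def by (auto intro!: module.subspace_scale[OF md sub_prev])
lemma R_sc: "inR Af F \<Longrightarrow> inR Af (sc scale c F)"
  unfolding inR_def sc_def by (auto intro!: module.subspace_scale[OF md sub])

lemma R_pow: "inR Af G \<Longrightarrow> m \<ge> 1 \<Longrightarrow> inR Af (G ^ m)"
proof (induction m)
  case 0 then show ?case by simp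
next
  case (Suc m)
  show ?case
  proof (cases "m = 0")
    case True then show ?thesis using Suc by simp
  next
    case False then show ?thesis using Suc R_mult by (simp add: power_Suc2 del: power_Suc)
  qed
qed

lemma pow0: "G $ 0 = 0 \<Longrightarrow> m \<ge> 1 \<Longrightarrow> (G ^ m) $ 0 = (0::'a)"
  by (induction m) (auto simp: power_Suc2 simp del: power_Suc)

lemma sc_mult: "sc scale c (F * H) = F * sc scale c H"
  by (rule fps_ext) (simp add: sc_def fps_mult_nth module.scale_sum_right[OF md] phi2)
lemma sc_add: "sc scale c (F + H) = sc scale c F + sc scale c H"
  by (rule fps_ext) (simp add: sc_def module.scale_right_distrib[OF md])
lemma sc_sc: "sc scale a (sc scale b F) = sc scale (a * b) F"
  by (rule fps_ext) (simp add: sc_def module.scale_scale[OF md])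
lemma sc_one: "sc scale 1 F = F"
  by (rule fps_ext) (simp add: sc_def module.scale_one[OF md])
lemma sc_zero: "sc scale 0 F = 0"
  by (rule fps_ext) (simp add: sc_def module.scale_zero_left[OF md])
lemma sc_nth0: "F $ 0 = 0 \<Longrightarrow> sc scale c F $ 0 = 0"
  by (simp add: sc_def module.scale_zero_right[OF md])

lemma X_I: "inR Af F \<Longrightarrow> inI Af (fps_X * F)"
  unfolding inR_def inI_def
proof (intro allI impI)
  fix n assume F: "\<forall>n. F $ n \<in> Af n"
  show "(fps_X * F) $ n \<in> filt_prev Af n"
    using F by (cases n) (auto simp: module.subspace_0[OF md sub_prev])
qed

lemma Cs_R: "inR Af F \<Longrightarrow> inR Af (Cs scale p * F)"
  unfolding inR_def
proof
  fix n assume F: "\<forall>n. F $ n \<in> Af n"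
  have "scale (coeff p (Suc i)) 1 * F $ (n - i) \<in> Af n" for i
  proof -
    have "scale (coeff p (Suc i)) 1 * F $ (n - i) = scale (coeff p (Suc i)) (F $ (n - i))"
      by (metis phi)
    also have "\<dots> \<in> Af (n - i)" using F by (auto intro!: module.subspace_scale[OF md sub])
    finally show ?thesis using mono_le[of "n - i" n] by auto
  qed
  then show "(Cs scale p * F) $ n \<in> Af n"
    unfolding fps_mult_nth Cs_def by (auto intro!: module.subspace_sum[OF md sub])
qed

lemma C_decomp: "Cf scale p = fps_const (scale (coeff p 0) 1) + fps_X * Cs scale p"
  by (rule fps_ext) (auto simp: Cf_def Cs_def)

lemma const_sc: "fps_const (scale c 1) * F = sc scale c F"
  by (rule fps_ext) (simp add: sc_def phi[of c "F $ _"])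

lemma Cmod: "inR Af F \<Longrightarrow> inI Af (Cf scale p * F - sc scale (coeff p 0) F)"
proof -
  assume F: "inR Af F"
  have "Cf scale p * F - sc scale (coeff p 0) F = fps_X * (Cs scale p * F)"
    by (simp add: C_decomp distrib_right const_sc mult.assoc)
  then show ?thesis using X_I[OF Cs_R[OF F]] by simp
qed

lemma key:
  assumes E: "inI Af (F + F * W)" and W: "inR Af W" and W0: "W $ 0 = 0"
  shows "inI Af F"
  unfolding inI_def
proof
  fix m
  show "F $ m \<in> filt_prev Af m"
  proof (induction m rule: less_induct)
    case (less m)
    have "(F * W) $ m \<in> filt_prev Af m"
      unfolding fps_mult_nth
    proof (intro module.subspace_sum[OF md sub_prev])
      fix i assume i: "i \<in> {0..m}"
      show "F $ i * W $ (m - i) \<in> filt_prev Af m"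
      proof (cases "i = m")
        case True then show ?thesis
          using W0 module.subspace_0[OF md sub_prev] by simp
      next
        case False
        then have "i < m" using i by auto
        then have "F $ i * W $ (m - i) \<in> filt_prev Af (i + (m - i))"
          using less W unfolding inR_def by (intro prev_mult) auto
        then show ?thesis using \<open>i < m\<close> by simp
      qed
    qed
    moreover have "(F + F * W) $ m \<in> filt_prev Af m" using E unfolding inI_def by blast
    ultimately have "(F + F * W) $ m - (F * W) $ m \<in> filt_prev Af m"
      using module.subspace_diff[OF md sub_prev] by blast
    then show ?case by simp
  qed
qed

lemma kact_eq: "kpoly_act scale p f = fps_nth (Cf scale p * Abs_fps f)"
  by (rule ext) (simp add: kpoly_act_def fps_mult_nth atMost_atLeast0 Cf_def phi[of _ "f _"])

end

theorem corollary5p3: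
  fixes scale :: "'k::field \<Rightarrow> 'a::ring_1 \<Rightarrow> 'a"
    and Af :: "nat \<Rightarrow> 'a set"
  assumes "k_algebra scale"
    and "algebra_filtration scale Af"
    and "\<forall>r \<in> rees_algebra Af. integral_over_kx scale r"
  shows "gr_pos_nil Af"
proof -
  note kalg = assms(1) and filt = assms(2)
  show ?thesis unfolding gr_pos_nil_def
  proof (intro allI impI)
    fix g :: "nat \<Rightarrow> 'a" assume gg: "gr_rep Af g \<and> g 0 = 0"
    define G where "G = Abs_fps g"
    have GR: "inR Af G" using gg unfolding G_def inR_def gr_rep_def by simp
    have G0: "G $ 0 = 0" using gg unfolding G_def by simp
    have "g \<in> rees_algebra Af" using gg unfolding gr_rep_def rees_algebra_def by simp
    then have "integral_over_kx scale g" using assms(3) by blast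
    then obtain n p where n1: "n \<ge> 1" and eq:
      "(\<lambda>m. apoly_pow g n m + (\<Sum>i<n. kpoly_act scale (p i) (apoly_pow g i) m)) = (\<lambda>_. 0)"
      unfolding integral_over_kx_def by blast
    have Z0: "G ^ n + (\<Sum>i<n. Cf scale (p i) * G ^ i) = 0"
    proof (rule fps_ext)
      fix m
      have "apoly_pow g n m + (\<Sum>i<n. kpoly_act scale (p i) (apoly_pow g i) m) = 0"
        using fun_cong[OF eq, of m] by simp
      then show "(G ^ n + (\<Sum>i<n. Cf scale (p i) * G ^ i)) $ m = 0 $ m"
        by (simp add: pow_eq kact_eq[OF kalg filt] fps_sum_nth fps_nth_inverse G_def)
    qed
    have Z: "G ^ (n + 1) + (\<Sum>i<n. Cf scale (p i) * G ^ (i + 1)) = 0"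
    proof -
      have "(G ^ n + (\<Sum>i<n. Cf scale (p i) * G ^ i)) * G = 0" using Z0 by simp
      then show ?thesis
        by (simp add: distrib_right sum_distrib_right mult.assoc power_Suc2 del: power_Suc)
    qed
    define c where "c i = coeff (p i) 0" for i
    define E where "E = G ^ (n + 1) + (\<Sum>i<n. sc scale (c i) (G ^ (i + 1)))"
    have "E = - (\<Sum>i<n. Cf scale (p i) * G ^ (i + 1) - sc scale (c i) (G ^ (i + 1)))"
      using Z unfolding E_def sum_subtractf
      by (simp add: algebra_simps)
    moreover have "inI Af (- (\<Sum>i<n. Cf scale (p i) * G ^ (i + 1) - sc scale (c i) (G ^ (i + 1))))"
      unfolding c_def
      by (intro I_uminus[OF kalg filt] I_sum[OF kalg filt] Cmod[OF kalg filt] R_pow[OF kalg filt GR]) simp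
    ultimately have EI: "inI Af E" by simp
    define k where "k i = (if i < n then c i else 1)" for i
    have E2: "E = (\<Sum>i\<le>n. sc scale (k i) (G ^ (i + 1)))"
      unfolding E_def lessThan_Suc_atMost[symmetric] sum.lessThan_Suc
      by (simp add: k_def sc_one[OF kalg filt] add.commute)
    define j where "j = (LEAST i. k i \<noteq> 0)"
    have kn: "k n \<noteq> 0" by (simp add: k_def)
    have jn: "j \<le> n" unfolding j_def using kn by (rule Least_le)
    have kj: "k j \<noteq> 0" unfolding j_def using kn by (rule LeastI)
    have klt: "i < j \<Longrightarrow> k i = 0" for i unfolding j_def using not_less_Least by blast
    define F where "F = G ^ (j + 1)"
    define T where "T = (\<Sum>i\<in>{Suc j..n}. sc scale (k i) (G ^ (i - j)))"
    have "E = (\<Sum>i\<in>{j..n}. sc scale (k i) (G ^ (i + 1)))"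
      unfolding E2
      by (rule sum.mono_neutral_right) (auto simp: klt sc_zero[OF kalg filt])
    also have "\<dots> = sc scale (k j) F + (\<Sum>i\<in>{Suc j..n}. sc scale (k i) (G ^ (i + 1)))"
      using jn by (simp add: sum.atLeast_Suc_atMost F_def)
    also have "(\<Sum>i\<in>{Suc j..n}. sc scale (k i) (G ^ (i + 1))) = F * T"
      unfolding T_def sum_distrib_left
    proof (rule sum.cong)
      fix i assume "i \<in> {Suc j..n}"
      then have "G ^ (i + 1) = F * G ^ (i - j)" unfolding F_def power_add[symmetric] by simp
      then show "sc scale (k i) (G ^ (i + 1)) = F * sc scale (k i) (G ^ (i - j))"
        by (simp add: sc_mult[OF kalg filt])
    qed simp
    finally have E3: "E = sc scale (k j) F + F * T" .
    have TR: "inR Af T" unfolding T_def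
      by (intro R_sum[OF kalg filt] R_sc[OF kalg filt] R_pow[OF kalg filt GR]) auto
    have T0: "T $ 0 = 0" unfolding T_def fps_sum_nth
      by (intro sum.neutral ballI sc_nth0[OF kalg filt] pow0[OF kalg filt G0]) auto
    have "sc scale (inverse (k j)) E = F + F * sc scale (inverse (k j)) T"
    proof -
      have "sc scale (inverse (k j)) E = sc scale (inverse (k j)) (sc scale (k j) F) + sc scale (inverse (k j)) (F * T)"
        unfolding E3 by (rule sc_add[OF kalg filt])
      also have "sc scale (inverse (k j)) (sc scale (k j) F) = sc scale (inverse (k j) * k j) F"
        by (rule sc_sc[OF kalg filt])
      also have "inverse (k j) * k j = 1" using kj by simp
      also have "sc scale 1 F = F" by (rule sc_one[OF kalg filt])
      also have "sc scale (inverse (k j)) (F * T) = F * sc scale (inverse (k j)) T"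
        by (rule sc_mult[OF kalg filt])
      finally show ?thesis .
    qed
    moreover have "inI Af (sc scale (inverse (k j)) E)" using EI by (rule I_sc[OF kalg filt])
    ultimately have "inI Af (F + F * sc scale (inverse (k j)) T)" by simp
    then have FI: "inI Af F"
      by (rule key[OF kalg filt _ R_sc[OF kalg filt TR] sc_nth0[OF kalg filt T0]])
    have "gr_is_zero Af (apoly_pow g (j + 1))"
      unfolding gr_is_zero_def pow_eq using FI unfolding inI_def F_def G_def by blast
    then show "\<exists>N\<ge>1. gr_is_zero Af (apoly_pow g N)" by (intro exI[of _ "j + 1"]) simp
  qed
qed

end
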